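(* Let $n>2$ and $r=n$. The depth-two claw $G_n$ with $n$ leaves is not $r$-EKR.
   Context: A depth-two claw with $n$ leaves, $G_n$, is the tree with a root $c$ adjacent to vertices $b_1,\dots,b_n$, where each $b_i$ is adjacent to exactly one further vertex $a_i$. An $r$-independent set is an independent set of size $r$. A family of sets is intersecting if every two members meet. A canonically intersecting family is the family of all $r$-independent sets containing a fixed vertex. A graph is $r$-EKR if the maximum size of an intersecting family of $r$-independent sets equals the maximum size of a canonically intersecting family. *)

theory Defs
  imports Main
begin

definition indep_sets :: "'a set \<Rightarrow> ('a \<Rightarrow> 'a \<Rightarrow> bool) \<Rightarrow> nat \<Rightarrow> 'a set set" where
  "indep_sets V adj r =
     {S. S \<subseteq> V \<and> card S = r \<and> (\<forall>x\<in>S. \<forall>y\<in>S. \<not> adj x y)}"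

definition intersecting :: "'a set set \<Rightarrow> bool" where
  "intersecting F \<longleftrightarrow> (\<forall>A\<in>F. \<forall>B\<in>F. A \<inter> B \<noteq> {})"

definition star :: "'a set \<Rightarrow> ('a \<Rightarrow> 'a \<Rightarrow> bool) \<Rightarrow> nat \<Rightarrow> 'a \<Rightarrow> 'a set set" where
  "star V adj r v = {S \<in> indep_sets V adj r. v \<in> S}"

definition r_EKR :: "'a set \<Rightarrow> ('a \<Rightarrow> 'a \<Rightarrow> bool) \<Rightarrow> nat \<Rightarrow> bool" where
  "r_EKR V adj r \<longleftrightarrow>
     Max {card F | F. F \<subseteq> indep_sets V adj r \<and> intersecting F}
       = Max {card (star V adj r v) | v. v \<in> V}"

text \<open>Depth-two claw G_n: root c, middle vertices b_1..b_n, leaves a_1..a_n.\<close>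

datatype claw_vertex = Root | Mid nat | Leaf nat

definition claw_V :: "nat \<Rightarrow> claw_vertex set" where
  "claw_V n = {Root} \<union> Mid ` {1..n} \<union> Leaf ` {1..n}"

fun claw_adj :: "claw_vertex \<Rightarrow> claw_vertex \<Rightarrow> bool" where
  "claw_adj Root (Mid i) = True"
| "claw_adj (Mid i) Root = True"
| "claw_adj (Mid i) (Leaf j) = (i = j)"
| "claw_adj (Leaf j) (Mid i) = (i = j)"
| "claw_adj _ _ = False"

end

theory Submission
  imports Defs
begin

lemma claw_fin: "finite (claw_V n)"
  by (simp add: claw_V_def)

lemma star_fin: "finite V \<Longrightarrow> finite (star V adj r v)"
  unfolding star_def indep_sets_def
  by (rule finite_subset[of _ "Pow V"]) auto

lemma indep_fin: "finite V \<Longrightarrow> finite (indep_sets V adj r)"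
  unfolding indep_sets_def
  by (rule finite_subset[of _ "Pow V"]) auto

lemma star_intersecting: "intersecting (star V adj r v)"
  unfolding intersecting_def star_def by auto

lemma card_Mid_minus: "card (Mid ` ({1..n} - {i})) = card ({1..n::nat} - {i})"
  by (rule card_image) (auto intro: inj_onI)

lemma card_Leaf_minus: "card (Leaf ` ({1..n} - {i})) = card ({1..n::nat} - {i})"
  by (rule card_image) (auto intro: inj_onI)

lemma card_minus_i: "i \<in> {1..n::nat} \<Longrightarrow> card ({1..n} - {i}) = n - 1"
  by simp

lemma T0_card:
  assumes "i \<in> {1..n}"
  shows "card (insert (Leaf i) (Mid ` ({1..n} - {i}))) = n"
proof -
  have "card (insert (Leaf i) (Mid ` ({1..n} - {i}))) = Suc (card (Mid ` ({1..n} - {i})))"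
    by (rule card_insert_disjoint) auto
  then show ?thesis using card_Mid_minus[of n i] card_minus_i[OF assms] assms by simp
qed

lemma T0'_card:
  assumes "i \<in> {1..n}"
  shows "card (insert (Mid i) (Leaf ` ({1..n} - {i}))) = n"
proof -
  have "card (insert (Mid i) (Leaf ` ({1..n} - {i}))) = Suc (card (Leaf ` ({1..n} - {i})))"
    by (rule card_insert_disjoint) auto
  then show ?thesis using card_Leaf_minus[of n i] card_minus_i[OF assms] assms by simp
qed

lemma R_card:
  assumes "i \<in> {1..n}"
  shows "card (insert Root (Leaf ` ({1..n} - {i}))) = n"
proof -
  have "card (insert Root (Leaf ` ({1..n} - {i}))) = Suc (card (Leaf ` ({1..n} - {i})))"
    by (rule card_insert_disjoint) auto
  then show ?thesis using card_Leaf_minus[of n i] card_minus_i[OF assms] assms by simp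
qed

lemma indepD:
  assumes "S \<in> indep_sets V adj r"
  shows "S \<subseteq> V" "card S = r" "\<And>x y. x \<in> S \<Longrightarrow> y \<in> S \<Longrightarrow> \<not> adj x y"
  using assms unfolding indep_sets_def by auto

lemma leaf_key:
  assumes S: "S \<in> indep_sets (claw_V n) claw_adj n"
    and Li: "Leaf i \<in> S" and noL: "\<forall>j. j \<noteq> i \<longrightarrow> Leaf j \<notin> S" and noR: "Root \<notin> S"
  shows "S = insert (Leaf i) (Mid ` ({1..n} - {i}))"
proof -
  have iin: "i \<in> {1..n}" using indepD(1)[OF S] Li by (auto simp: claw_V_def)
  have sub: "S \<subseteq> insert (Leaf i) (Mid ` ({1..n} - {i}))"
  proof
    fix x assume x: "x \<in> S"
    have xv: "x \<in> claw_V n" using indepD(1)[OF S] x by auto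
    show "x \<in> insert (Leaf i) (Mid ` ({1..n} - {i}))"
    proof (cases x)
      case Root then show ?thesis using noR x by simp
    next
      case (Mid j)
      have "\<not> claw_adj x (Leaf i)" using indepD(3)[OF S x Li] .
      then have "j \<noteq> i" using Mid by auto
      then show ?thesis using Mid xv by (auto simp: claw_V_def)
    next
      case (Leaf j) then show ?thesis using noL x by auto
    qed
  qed
  show ?thesis
    by (rule card_subset_eq) (use sub indepD(2)[OF S] T0_card[OF iin] in auto)
qed

lemma root_sub:
  assumes S: "S \<in> indep_sets (claw_V n) claw_adj n" and R: "Root \<in> S"
  shows "S - {Root} \<subseteq> Leaf ` {1..n}"
proof
  fix x assume x: "x \<in> S - {Root}"
  have xv: "x \<in> claw_V n" using indepD(1)[OF S] x by auto
  show "x \<in> Leaf ` {1..n}"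
  proof (cases x)
    case Root then show ?thesis using x by simp
  next
    case (Mid j)
    have "\<not> claw_adj Root x" using indepD(3)[OF S R] x by auto
    then show ?thesis using Mid by simp
  next
    case (Leaf j) then show ?thesis using xv by (auto simp: claw_V_def)
  qed
qed

lemma mid_star_le:
  assumes "i \<in> {1..n}"
  shows "card (star (claw_V n) claw_adj n (Mid i)) \<le> card (star (claw_V n) claw_adj n (Leaf i))"
proof -
  define f where "f S = insert (Leaf i) (S - {Mid i})" for S
  have nLs: "Leaf i \<notin> S" if S: "S \<in> star (claw_V n) claw_adj n (Mid i)" for S
  proof
    assume "Leaf i \<in> S"
    moreover have "Mid i \<in> S" "S \<in> indep_sets (claw_V n) claw_adj n" using S unfolding star_def by auto
    ultimately show False using indepD(3) by fastforce
  qed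
  have inv: "S - {Mid i} = f S - {Leaf i}" if "Leaf i \<notin> S" for S
    using that unfolding f_def by auto
  have "inj_on f (star (claw_V n) claw_adj n (Mid i))"
  proof (rule inj_onI)
    fix S T assume S: "S \<in> star (claw_V n) claw_adj n (Mid i)" and T: "T \<in> star (claw_V n) claw_adj n (Mid i)"
      and e: "f S = f T"
    have "S - {Mid i} = T - {Mid i}" using inv[OF nLs[OF S]] inv[OF nLs[OF T]] e by simp
    moreover have "Mid i \<in> S" "Mid i \<in> T" using S T unfolding star_def by auto
    ultimately show "S = T" by (metis insert_Diff)
  qed
  moreover have "f ` star (claw_V n) claw_adj n (Mid i) \<subseteq> star (claw_V n) claw_adj n (Leaf i)"
  proof
    fix X assume "X \<in> f ` star (claw_V n) claw_adj n (Mid i)"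
    then obtain S where S: "S \<in> star (claw_V n) claw_adj n (Mid i)" and X: "X = f S" by auto
    have Si: "S \<in> indep_sets (claw_V n) claw_adj n" and M: "Mid i \<in> S" using S unfolding star_def by auto
    have nL: "Leaf i \<notin> S" using nLs[OF S] .
    have fin: "finite S" using indepD(1)[OF Si] claw_fin finite_subset by blast
    have c1: "card (S - {Mid i}) = n - 1" using card_Diff_singleton[OF M] indepD(2)[OF Si] by simp
    have npos: "n > 0" using M fin indepD(2)[OF Si] card_gt_0_iff by blast
    have "card X = Suc (card (S - {Mid i}))" unfolding X f_def
      by (rule card_insert_disjoint) (use fin nL in auto)
    then have "card X = n" using c1 npos by simp
    moreover have "X \<subseteq> claw_V n" unfolding X f_def using indepD(1)[OF Si] assms
      by (auto simp: claw_V_def)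
    moreover have "\<forall>x\<in>X. \<forall>y\<in>X. \<not> claw_adj x y"
    proof (intro ballI)
      fix x y assume x: "x \<in> X" and y: "y \<in> X"
      have a: "\<not> claw_adj z (Leaf i) \<and> \<not> claw_adj (Leaf i) z" if z: "z \<in> S - {Mid i}" for z
      proof -
        have "z \<noteq> Mid i" using z by auto
        then show ?thesis by (cases z) auto
      qed
      have "x = Leaf i \<or> x \<in> S - {Mid i}" "y = Leaf i \<or> y \<in> S - {Mid i}" using x y unfolding X f_def by auto
      then show "\<not> claw_adj x y"
      proof (elim disjE)
        assume "x = Leaf i" "y = Leaf i" then show ?thesis by simp
      next
        assume "x = Leaf i" "y \<in> S - {Mid i}" then show ?thesis using a by blast
      next
        assume "x \<in> S - {Mid i}" "y = Leaf i" then show ?thesis using a by blast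
      next
        assume "x \<in> S - {Mid i}" "y \<in> S - {Mid i}" then show ?thesis using indepD(3)[OF Si] by blast
      qed
    qed
    ultimately show "X \<in> star (claw_V n) claw_adj n (Leaf i)"
      unfolding star_def indep_sets_def X f_def by auto
  qed
  ultimately show ?thesis
    using card_inj_on_le star_fin claw_fin by metis
qed


lemma other_leaf:
  assumes n: "n > 2" and S: "S \<in> star (claw_V n) claw_adj n (Leaf i)"
    and ne: "S \<noteq> insert (Leaf i) (Mid ` ({1..n} - {i}))"
  shows "\<exists>j. j \<noteq> i \<and> j \<in> {1..n} \<and> Leaf j \<in> S"
proof (rule ccontr)
  assume no: "\<not> (\<exists>j. j \<noteq> i \<and> j \<in> {1..n} \<and> Leaf j \<in> S)"
  have Si: "S \<in> indep_sets (claw_V n) claw_adj n" and Li: "Leaf i \<in> S" using S unfolding star_def by auto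
  have noL: "\<forall>j. j \<noteq> i \<longrightarrow> Leaf j \<notin> S"
  proof (intro allI impI)
    fix j assume "j \<noteq> i"
    show "Leaf j \<notin> S"
    proof
      assume "Leaf j \<in> S"
      then have "j \<in> {1..n}" using indepD(1)[OF Si] by (auto simp: claw_V_def)
      then show False using no \<open>j \<noteq> i\<close> \<open>Leaf j \<in> S\<close> by blast
    qed
  qed
  show False
  proof (cases "Root \<in> S")
    case True
    have "S \<subseteq> {Root, Leaf i}"
    proof
      fix x assume x: "x \<in> S"
      show "x \<in> {Root, Leaf i}"
      proof (cases "x = Root")
        case False
        then have "x \<in> Leaf ` {1..n}" using root_sub[OF Si True] x by auto
        then show ?thesis using noL x by auto
      qed simp
    qed
    then have "card S \<le> card {Root, Leaf i}" by (intro card_mono) auto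
    also have "\<dots> \<le> 2" by (simp add: card_insert_if)
    finally have "card S \<le> 2" .
    then show False using indepD(2)[OF Si] n by simp
  next
    case False
    then show False using leaf_key[OF Si Li noL False] ne by simp
  qed
qed

lemma leaf_family:
  assumes n: "n > 2" and iin: "i \<in> {1..n}"
  shows "\<exists>F. F \<subseteq> indep_sets (claw_V n) claw_adj n \<and> intersecting F \<and>
           card F > card (star (claw_V n) claw_adj n (Leaf i))"
proof -
  define St where "St = star (claw_V n) claw_adj n (Leaf i)"
  define T0 where "T0 = insert (Leaf i) (Mid ` ({1..n} - {i}))"
  define T1 where "T1 = insert (Mid i) (Leaf ` ({1..n} - {i}))"
  define R where "R = insert Root (Leaf ` ({1..n} - {i}))"
  define F where "F = insert R (insert T1 (St - {T0}))"
  have finSt: "finite St" unfolding St_def by (rule star_fin[OF claw_fin])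
  have T0St: "T0 \<in> St"
  proof -
    have "T0 \<subseteq> claw_V n" unfolding T0_def using iin by (auto simp: claw_V_def)
    moreover have "\<forall>x\<in>T0. \<forall>y\<in>T0. \<not> claw_adj x y" unfolding T0_def by auto
    ultimately show ?thesis unfolding St_def star_def indep_sets_def T0_def
      using T0_card[OF iin] by auto
  qed
  have T1I: "T1 \<in> indep_sets (claw_V n) claw_adj n"
  proof -
    have "T1 \<subseteq> claw_V n" unfolding T1_def using iin by (auto simp: claw_V_def)
    moreover have "\<forall>x\<in>T1. \<forall>y\<in>T1. \<not> claw_adj x y" unfolding T1_def by auto
    ultimately show ?thesis unfolding indep_sets_def T1_def
      using T0'_card[OF iin] by auto
  qed
  have RI: "R \<in> indep_sets (claw_V n) claw_adj n"
  proof -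
    have "R \<subseteq> claw_V n" unfolding R_def using iin by (auto simp: claw_V_def)
    moreover have "\<forall>x\<in>R. \<forall>y\<in>R. \<not> claw_adj x y" unfolding R_def by auto
    ultimately show ?thesis unfolding indep_sets_def R_def
      using R_card[OF iin] by auto
  qed
  have T1St: "T1 \<notin> St" unfolding T1_def St_def star_def by auto
  have RSt: "R \<notin> St" unfolding R_def St_def star_def by auto
  have RT1: "R \<noteq> T1" unfolding R_def T1_def by auto
  have cF2: "card F = Suc (Suc (card (St - {T0})))" unfolding F_def
    using finSt T1St RSt RT1 by (simp add: card_insert_if)
  have cpos: "card St > 0" using T0St finSt card_gt_0_iff by blast
  have "card F = Suc (card St)" using cF2
    card_Diff_singleton[OF T0St] cpos by simp
  then have cF: "card F > card St" by simp
  have FI: "F \<subseteq> indep_sets (claw_V n) claw_adj n"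
    unfolding F_def using T1I RI unfolding St_def star_def by auto
  define j where "j = (if i = 1 then 2 else (1::nat))"
  have j: "j \<noteq> i" "j \<in> {1..n}" using n iin unfolding j_def by auto
  have RT1i: "R \<inter> T1 \<noteq> {}" using j unfolding R_def T1_def by auto
  have SR: "S \<inter> R \<noteq> {} \<and> S \<inter> T1 \<noteq> {}" if S: "S \<in> St - {T0}" for S
  proof -
    obtain k where "k \<noteq> i" "k \<in> {1..n}" "Leaf k \<in> S"
      using other_leaf[OF n, of S i] S unfolding St_def T0_def by auto
    then show ?thesis unfolding R_def T1_def by auto
  qed
  have SS: "S \<inter> S' \<noteq> {}" if "S \<in> St" "S' \<in> St" for S S'
    using that unfolding St_def star_def by auto
  have RR: "R \<inter> R \<noteq> {}" unfolding R_def by auto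
  have TT: "T1 \<inter> T1 \<noteq> {}" unfolding T1_def by auto
  have T1R: "T1 \<inter> R \<noteq> {}" using RT1i by (simp add: Int_commute)
  have SR': "R \<inter> S \<noteq> {} \<and> T1 \<inter> S \<noteq> {}" if "S \<in> St - {T0}" for S
    using SR[OF that] by (simp add: Int_commute)
  have "A \<inter> B \<noteq> {}" if A: "A \<in> F" and B: "B \<in> F" for A B
  proof -
    have "A = R \<or> A = T1 \<or> A \<in> St - {T0}" "B = R \<or> B = T1 \<or> B \<in> St - {T0}"
      using A B unfolding F_def by auto
    then show ?thesis using RR TT RT1i T1R SR SR' SS by blast
  qed
  then have "intersecting F" unfolding intersecting_def by blast  
  then show ?thesis using FI cF unfolding St_def by blast
qed

lemma root_family:
  assumes n: "n > 2"
  shows "\<exists>F. F \<subseteq> indep_sets (claw_V n) claw_adj n \<and> intersecting F \<and>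
           card F > card (star (claw_V n) claw_adj n Root)"
proof -
  define St where "St = star (claw_V n) claw_adj n Root"
  define L where "L = Leaf ` {1..n}"
  have finSt: "finite St" unfolding St_def by (rule star_fin[OF claw_fin])
  have cL: "card L = n" unfolding L_def by (subst card_image) (auto intro: inj_onI)
  have LI: "L \<in> indep_sets (claw_V n) claw_adj n"
    unfolding indep_sets_def using cL by (auto simp: L_def claw_V_def)
  have LSt: "L \<notin> St" unfolding L_def St_def star_def by auto
  have cF: "card (insert L St) > card St" using finSt LSt by simp
  have SL: "S \<inter> L \<noteq> {}" if S: "S \<in> St" for S
  proof -
    have Si: "S \<in> indep_sets (claw_V n) claw_adj n" and R: "Root \<in> S" using S unfolding St_def star_def by auto
    have "card (S - {Root}) = n - 1" using card_Diff_singleton[OF R] indepD(2)[OF Si] by simp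
    then have "card (S - {Root}) > 0" using n by simp
    then have "S - {Root} \<noteq> {}" using card_gt_0_iff by blast
    then show ?thesis using root_sub[OF Si R] unfolding L_def by blast
  qed
  have Lne: "L \<noteq> {}" using cL n by auto
  have "intersecting (insert L St)"
    unfolding intersecting_def using SL Lne by (auto simp: St_def star_def)
  moreover have "insert L St \<subseteq> indep_sets (claw_V n) claw_adj n"
    using LI unfolding St_def star_def by auto
  ultimately show ?thesis using cF unfolding St_def by blast
qed

theorem proposition9p4:
  fixes n :: nat
  assumes "n > 2"
  shows "\<not> r_EKR (claw_V n) claw_adj n"
proof
  assume E: "r_EKR (claw_V n) claw_adj n"
  define I where "I = indep_sets (claw_V n) claw_adj n"
  define A where "A = {card F | F. F \<subseteq> I \<and> intersecting F}"
  define B where "B = {card (star (claw_V n) claw_adj n v) | v. v \<in> claw_V n}"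
  have finA: "finite A"
  proof -
    have "A \<subseteq> card ` Pow I" unfolding A_def by auto
    moreover have "finite I" unfolding I_def by (rule indep_fin[OF claw_fin])
    ultimately show ?thesis using finite_subset by blast
  qed
  have finB: "finite B" unfolding B_def using claw_fin by simp
  have neB: "B \<noteq> {}" unfolding B_def claw_V_def by auto
  have "Max B \<in> B" using Max_in[OF finB neB] .
  then obtain v where v: "v \<in> claw_V n" and mB: "Max B = card (star (claw_V n) claw_adj n v)"
    unfolding B_def by auto
  have "\<exists>F. F \<subseteq> I \<and> intersecting F \<and> card F > card (star (claw_V n) claw_adj n v)"
  proof (cases v)
    case Root then show ?thesis using root_family[OF assms] unfolding I_def by simp
  next
    case (Mid i)
    then have iin: "i \<in> {1..n}" using v by (auto simp: claw_V_def)
    then show ?thesis using leaf_family[OF assms iin] mid_star_le[OF iin] Mid unfolding I_def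
      by (meson le_less_trans)
  next
    case (Leaf i)
    then have iin: "i \<in> {1..n}" using v by (auto simp: claw_V_def)
    then show ?thesis using leaf_family[OF assms iin] Leaf unfolding I_def by simp
  qed
  then obtain F where F: "F \<subseteq> I" "intersecting F" "card F > Max B" using mB by auto
  have "card F \<in> A" unfolding A_def using F by auto
  then have "Max A \<ge> card F" using finA by simp
  then have "Max A > Max B" using F by simp
  moreover have "Max A = Max B" using E unfolding r_EKR_def A_def B_def I_def .
  ultimately show False by simp
qed

end
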